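(* Let $T$ be a complete theory with monster model $\mathcal{U}$, $A\subseteq\mathcal{U}$ small, $\mu\in\mathfrak{M}_x(\mathcal{U})$, $\nu\in\mathfrak{M}_y(\mathcal{U})$. If $\mu$ is smooth over $A$ and $\mu\geq_{\mathbb{E},A}\nu$, then $\nu$ is smooth over $A$.
   Context: For $C\subseteq\mathcal{U}$, $\mathcal{L}_x(C)$ is the Boolean algebra of formulas in $x$ with parameters from $C$ modulo $T$, embedded in $\mathcal{L}_{xy}(C)$ via $\varphi(x)\mapsto\varphi(x)\wedge y=y$; $\mathfrak{M}_x(C)$ is the set of finitely additive probability measures on $\mathcal{L}_x(C)$. For $\omega\in\mathfrak{M}_{xy}(C)$, $\pi_x(\omega)(\varphi(x))=\omega(\varphi(x)\wedge y=y)$ (similarly $\pi_y$); $\omega|_D$ is restriction. $\mu\geq_{\mathbb{E},A}\nu$ means there is $\lambda\in\mathfrak{M}_{xy}(A)$ with $\pi_x(\lambda)=\mu|_A$ such that every $\omega\in\mathfrak{M}_{xy}(\mathcal{U})$ with $\omega|_A=\lambda$ and $\pi_x(\omega)=\mu$ satisfies $\pi_y(\omega)=\nu$. A global measure $\mu$ is smooth over $A$ if every global measure (in the same variables) agreeing with $\mu$ on $\mathcal{L}_x(A)$ equals $\mu$. *)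

theory Defs
  imports Complex_Main
begin

datatype ('f, 'a) trm = Var nat | Par 'a | Fn 'f "('f, 'a) trm list"

datatype ('f, 'r, 'a) fm =
    Tru
  | Eq "('f, 'a) trm" "('f, 'a) trm"
  | Rel 'r "('f, 'a) trm list"
  | Neg "('f, 'r, 'a) fm"
  | Conj "('f, 'r, 'a) fm" "('f, 'r, 'a) fm"
  | Ex nat "('f, 'r, 'a) fm"

definition Disj :: "('f, 'r, 'a) fm \<Rightarrow> ('f, 'r, 'a) fm \<Rightarrow> ('f, 'r, 'a) fm" where
  "Disj \<phi> \<psi> = Neg (Conj (Neg \<phi>) (Neg \<psi>))"

definition Fls :: "('f, 'r, 'a) fm" where
  "Fls = Neg Tru"

record ('f, 'r) sig =
  fun_ar :: "'f \<Rightarrow> nat"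
  rel_ar :: "'r \<Rightarrow> nat"

record ('a, 'f, 'r) str =
  dom :: "'a set"
  fun_int :: "'f \<Rightarrow> 'a list \<Rightarrow> 'a"
  rel_int :: "'r \<Rightarrow> 'a list \<Rightarrow> bool"

fun wf_trm :: "('f, 'r) sig \<Rightarrow> ('f, 'a) trm \<Rightarrow> bool" where
  "wf_trm L (Var n) = True"
| "wf_trm L (Par a) = True"
| "wf_trm L (Fn f ts) = (length ts = fun_ar L f \<and> (\<forall>t\<in>set ts. wf_trm L t))"

fun wf_fm :: "('f, 'r) sig \<Rightarrow> ('f, 'r, 'a) fm \<Rightarrow> bool" where
  "wf_fm L Tru = True"
| "wf_fm L (Eq t u) = (wf_trm L t \<and> wf_trm L u)"
| "wf_fm L (Rel r ts) = (length ts = rel_ar L r \<and> (\<forall>t\<in>set ts. wf_trm L t))"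
| "wf_fm L (Neg \<phi>) = wf_fm L \<phi>"
| "wf_fm L (Conj \<phi> \<psi>) = (wf_fm L \<phi> \<and> wf_fm L \<psi>)"
| "wf_fm L (Ex v \<phi>) = wf_fm L \<phi>"

fun vars_trm :: "('f, 'a) trm \<Rightarrow> nat set" where
  "vars_trm (Var n) = {n}"
| "vars_trm (Par a) = {}"
| "vars_trm (Fn f ts) = (\<Union>t\<in>set ts. vars_trm t)"

fun pars_trm :: "('f, 'a) trm \<Rightarrow> 'a set" where
  "pars_trm (Var n) = {}"
| "pars_trm (Par a) = {a}"
| "pars_trm (Fn f ts) = (\<Union>t\<in>set ts. pars_trm t)"

fun fv :: "('f, 'r, 'a) fm \<Rightarrow> nat set" where
  "fv Tru = {}"
| "fv (Eq t u) = vars_trm t \<union> vars_trm u"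
| "fv (Rel r ts) = (\<Union>t\<in>set ts. vars_trm t)"
| "fv (Neg \<phi>) = fv \<phi>"
| "fv (Conj \<phi> \<psi>) = fv \<phi> \<union> fv \<psi>"
| "fv (Ex v \<phi>) = fv \<phi> - {v}"

fun pars :: "('f, 'r, 'a) fm \<Rightarrow> 'a set" where
  "pars Tru = {}"
| "pars (Eq t u) = pars_trm t \<union> pars_trm u"
| "pars (Rel r ts) = (\<Union>t\<in>set ts. pars_trm t)"
| "pars (Neg \<phi>) = pars \<phi>"
| "pars (Conj \<phi> \<psi>) = pars \<phi> \<union> pars \<psi>"
| "pars (Ex v \<phi>) = pars \<phi>"

fun eval :: "('a, 'f, 'r) str \<Rightarrow> (nat \<Rightarrow> 'a) \<Rightarrow> ('f, 'a) trm \<Rightarrow> 'a" where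
  "eval M s (Var n) = s n"
| "eval M s (Par a) = a"
| "eval M s (Fn f ts) = fun_int M f (map (eval M s) ts)"

fun sat :: "('a, 'f, 'r) str \<Rightarrow> (nat \<Rightarrow> 'a) \<Rightarrow> ('f, 'r, 'a) fm \<Rightarrow> bool" where
  "sat M s Tru = True"
| "sat M s (Eq t u) = (eval M s t = eval M s u)"
| "sat M s (Rel r ts) = rel_int M r (map (eval M s) ts)"
| "sat M s (Neg \<phi>) = (\<not> sat M s \<phi>)"
| "sat M s (Conj \<phi> \<psi>) = (sat M s \<phi> \<and> sat M s \<psi>)"
| "sat M s (Ex v \<phi>) = (\<exists>a\<in>dom M. sat M (s(v := a)) \<phi>)"

definition is_structure :: "('f, 'r) sig \<Rightarrow> ('a, 'f, 'r) str \<Rightarrow> bool" where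
  "is_structure L M \<longleftrightarrow> dom M \<noteq> {} \<and>
     (\<forall>f as. length as = fun_ar L f \<and> set as \<subseteq> dom M \<longrightarrow> fun_int M f as \<in> dom M)"

definition assignment :: "('a, 'f, 'r) str \<Rightarrow> (nat \<Rightarrow> 'a) \<Rightarrow> bool" where
  "assignment M s \<longleftrightarrow> (\<forall>n. s n \<in> dom M)"

definition sentence :: "('f, 'r) sig \<Rightarrow> ('f, 'r, 'a) fm \<Rightarrow> bool" where
  "sentence L \<phi> \<longleftrightarrow> wf_fm L \<phi> \<and> fv \<phi> = {} \<and> pars \<phi> = {}"

definition models :: "('a, 'f, 'r) str \<Rightarrow> ('f, 'r, 'a) fm set \<Rightarrow> bool" where
  "models M T \<longleftrightarrow> (\<forall>\<phi>\<in>T. \<forall>s. assignment M s \<longrightarrow> sat M s \<phi>)"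

definition complete_theory :: "('f, 'r) sig \<Rightarrow> ('f, 'r, 'a) fm set \<Rightarrow> bool" where
  "complete_theory L T \<longleftrightarrow> (\<forall>\<phi>\<in>T. sentence L \<phi>) \<and>
     (\<forall>\<phi>. sentence L \<phi> \<longrightarrow> \<phi> \<in> T \<or> Neg \<phi> \<in> T)"

definition small :: "'k rel \<Rightarrow> 'a set \<Rightarrow> bool" where
  "small \<kappa> A \<longleftrightarrow> (card_of A, \<kappa>) \<in> ordLess"

definition saturated :: "('f, 'r) sig \<Rightarrow> 'k rel \<Rightarrow> ('a, 'f, 'r) str \<Rightarrow> bool" where
  "saturated L \<kappa> M \<longleftrightarrow>
     (\<forall>C p. C \<subseteq> dom M \<and> small \<kappa> C \<and>
        (\<forall>\<phi>\<in>p. wf_fm L \<phi> \<and> fv \<phi> \<subseteq> {0} \<and> pars \<phi> \<subseteq> C) \<and>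
        (\<forall>q. q \<subseteq> p \<and> finite q \<longrightarrow> (\<exists>a\<in>dom M. \<forall>\<phi>\<in>q. sat M (\<lambda>_. a) \<phi>))
      \<longrightarrow> (\<exists>a\<in>dom M. \<forall>\<phi>\<in>p. sat M (\<lambda>_. a) \<phi>))"

definition automorphism :: "('f, 'r) sig \<Rightarrow> ('a, 'f, 'r) str \<Rightarrow> ('a \<Rightarrow> 'a) \<Rightarrow> bool" where
  "automorphism L M g \<longleftrightarrow> bij_betw g (dom M) (dom M) \<and>
     (\<forall>f as. length as = fun_ar L f \<and> set as \<subseteq> dom M \<longrightarrow>
         g (fun_int M f as) = fun_int M f (map g as)) \<and>
     (\<forall>r as. length as = rel_ar L r \<and> set as \<subseteq> dom M \<longrightarrow>
         rel_int M r as = rel_int M r (map g as))"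

definition partial_elementary :: "('f, 'r) sig \<Rightarrow> ('a, 'f, 'r) str \<Rightarrow> 'a set \<Rightarrow> ('a \<Rightarrow> 'a) \<Rightarrow> bool" where
  "partial_elementary L M C h \<longleftrightarrow> C \<subseteq> dom M \<and> h ` C \<subseteq> dom M \<and>
     (\<forall>\<phi> s. wf_fm L \<phi> \<and> pars \<phi> = {} \<and> (\<forall>n. s n \<in> C) \<longrightarrow>
        (sat M s \<phi> \<longleftrightarrow> sat M (h \<circ> s) \<phi>))"

definition strongly_homogeneous :: "('f, 'r) sig \<Rightarrow> 'k rel \<Rightarrow> ('a, 'f, 'r) str \<Rightarrow> bool" where
  "strongly_homogeneous L \<kappa> M \<longleftrightarrow>
     (\<forall>C h. small \<kappa> C \<and> partial_elementary L M C h \<longrightarrow>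
        (\<exists>g. automorphism L M g \<and> (\<forall>c\<in>C. g c = h c)))"

definition monster :: "('f, 'r) sig \<Rightarrow> ('f, 'r, 'a) fm set \<Rightarrow> 'k rel \<Rightarrow> ('a, 'f, 'r) str \<Rightarrow> bool" where
  "monster L T \<kappa> U \<longleftrightarrow> is_structure L U \<and> models U T \<and>
     Card_order \<kappa> \<and> \<not> finite (Field \<kappa>) \<and>
     (card_of (UNIV :: 'f set), \<kappa>) \<in> ordLess \<and> (card_of (UNIV :: 'r set), \<kappa>) \<in> ordLess \<and>
     saturated L \<kappa> U \<and> strongly_homogeneous L \<kappa> U"

text \<open>L_x(C): formulas whose free variables lie among the variables X (the tuple x), with
parameters from C. Two such formulas are identified modulo T, i.e. when they are equivalent
in the monster model U.\<close>
definition Lx :: "('f, 'r) sig \<Rightarrow> nat set \<Rightarrow> 'a set \<Rightarrow> ('f, 'r, 'a) fm set" where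
  "Lx L X C = {\<phi>. wf_fm L \<phi> \<and> fv \<phi> \<subseteq> X \<and> pars \<phi> \<subseteq> C}"

definition equiv_in :: "('a, 'f, 'r) str \<Rightarrow> ('f, 'r, 'a) fm \<Rightarrow> ('f, 'r, 'a) fm \<Rightarrow> bool" where
  "equiv_in U \<phi> \<psi> \<longleftrightarrow> (\<forall>s. assignment U s \<longrightarrow> (sat U s \<phi> \<longleftrightarrow> sat U s \<psi>))"

text \<open>A finitely additive probability measure on the Boolean algebra L_x(C), represented as a
real function on formulas that is invariant under equivalence (values outside L_x(C) are
irrelevant).\<close>
definition keisler :: "('f, 'r) sig \<Rightarrow> ('a, 'f, 'r) str \<Rightarrow> nat set \<Rightarrow> 'a set
    \<Rightarrow> (('f, 'r, 'a) fm \<Rightarrow> real) \<Rightarrow> bool" where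
  "keisler L U X C \<mu> \<longleftrightarrow>
     (\<forall>\<phi>\<in>Lx L X C. \<forall>\<psi>\<in>Lx L X C. equiv_in U \<phi> \<psi> \<longrightarrow> \<mu> \<phi> = \<mu> \<psi>) \<and>
     (\<forall>\<phi>\<in>Lx L X C. 0 \<le> \<mu> \<phi>) \<and>
     \<mu> Tru = 1 \<and>
     (\<forall>\<phi>\<in>Lx L X C. \<forall>\<psi>\<in>Lx L X C. equiv_in U (Conj \<phi> \<psi>) Fls \<longrightarrow>
        \<mu> (Disj \<phi> \<psi>) = \<mu> \<phi> + \<mu> \<psi>)"

definition agree_on :: "('f, 'r) sig \<Rightarrow> nat set \<Rightarrow> 'a set
    \<Rightarrow> (('f, 'r, 'a) fm \<Rightarrow> real) \<Rightarrow> (('f, 'r, 'a) fm \<Rightarrow> real) \<Rightarrow> bool" where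
  "agree_on L X C \<mu> \<nu> \<longleftrightarrow> (\<forall>\<phi>\<in>Lx L X C. \<mu> \<phi> = \<nu> \<phi>)"

definition triv_eq :: "nat set \<Rightarrow> ('f, 'r, 'a) fm" where
  "triv_eq Y = foldr (\<lambda>v \<phi>. Conj (Eq (Var v) (Var v)) \<phi>) (sorted_list_of_set Y) Tru"

definition marg :: "nat set \<Rightarrow> (('f, 'r, 'a) fm \<Rightarrow> real) \<Rightarrow> (('f, 'r, 'a) fm \<Rightarrow> real)" where
  "marg Y \<omega> = (\<lambda>\<phi>. \<omega> (Conj \<phi> (triv_eq Y)))"

definition smooth :: "('f, 'r) sig \<Rightarrow> ('a, 'f, 'r) str \<Rightarrow> nat set \<Rightarrow> 'a set
    \<Rightarrow> (('f, 'r, 'a) fm \<Rightarrow> real) \<Rightarrow> bool" where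
  "smooth L U X A \<mu> \<longleftrightarrow>
     (\<forall>\<mu>'. keisler L U X (dom U) \<mu>' \<and> agree_on L X A \<mu>' \<mu> \<longrightarrow> agree_on L X (dom U) \<mu>' \<mu>)"

definition E_geq :: "('f, 'r) sig \<Rightarrow> ('a, 'f, 'r) str \<Rightarrow> nat set \<Rightarrow> nat set \<Rightarrow> 'a set
    \<Rightarrow> (('f, 'r, 'a) fm \<Rightarrow> real) \<Rightarrow> (('f, 'r, 'a) fm \<Rightarrow> real) \<Rightarrow> bool" where
  "E_geq L U X Y A \<mu> \<nu> \<longleftrightarrow>
     (\<exists>lam. keisler L U (X \<union> Y) A lam \<and> agree_on L X A (marg Y lam) \<mu> \<and>
        (\<forall>\<omega>. keisler L U (X \<union> Y) (dom U) \<omega> \<and> agree_on L (X \<union> Y) A \<omega> lam \<and>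
              agree_on L X (dom U) (marg Y \<omega>) \<mu>
           \<longrightarrow> agree_on L Y (dom U) (marg X \<omega>) \<nu>))"

end

theory Submission
  imports Defs
begin

definition ind :: "'s set \<Rightarrow> 's \<Rightarrow> real" where
  "ind a x = (if x \<in> a then 1 else 0)"

definition lsum1 :: "(real \<times> ('s set \<times> real)) list \<Rightarrow> 's \<Rightarrow> real" where
  "lsum1 L x = sum_list (map (\<lambda>q. fst q * ind (fst (snd q)) x) L)"

definition lsum2 :: "(real \<times> ('s set \<times> real)) list \<Rightarrow> real" where
  "lsum2 L = sum_list (map (\<lambda>q. fst q * snd (snd q)) L)"

definition coh :: "'s set \<Rightarrow> ('s set \<times> real) set \<Rightarrow> bool" where
  "coh \<Omega> R \<longleftrightarrow> (\<forall>L. set (map snd L) \<subseteq> R \<longrightarrow> (\<forall>x\<in>\<Omega>. lsum1 L x \<le> 0) \<longrightarrow> lsum2 L \<le> 0)"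

definition scl :: "real \<Rightarrow> (real \<times> 'b) list \<Rightarrow> (real \<times> 'b) list" where
  "scl k L = map (\<lambda>q. (k * fst q, snd q)) L"

lemma lsum1_simps[simp]: "lsum1 [] x = 0" "lsum1 (q # L) x = fst q * ind (fst (snd q)) x + lsum1 L x"
  "lsum1 (L @ M) x = lsum1 L x + lsum1 M x" "lsum1 (scl k L) x = k * lsum1 L x"
  by (simp_all add: lsum1_def scl_def o_def sum_list_const_mult mult.assoc)

lemma lsum2_simps[simp]: "lsum2 [] = 0" "lsum2 (q # L) = fst q * snd (snd q) + lsum2 L"
  "lsum2 (L @ M) = lsum2 L + lsum2 M" "lsum2 (scl k L) = k * lsum2 L"
  by (simp_all add: lsum2_def scl_def o_def sum_list_const_mult mult.assoc)

lemma map_snd_scl[simp]: "map snd (scl k L) = map snd L"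
  by (simp add: scl_def o_def)

lemma lsum_filter:
  "lsum1 L x = lsum1 (filter P L) x + lsum1 (filter (\<lambda>q. \<not> P q) L) x"
  "lsum2 L = lsum2 (filter P L) + lsum2 (filter (\<lambda>q. \<not> P q) L)"
  by (induction L) auto

lemma lsum_const:
  assumes "\<forall>q\<in>set P. snd q = (c, v)"
  shows "lsum1 P x = sum_list (map fst P) * ind c x" "lsum2 P = sum_list (map fst P) * v"
  using assms by (induction P) (auto simp: algebra_simps)

lemma cohD: "coh \<Omega> R \<Longrightarrow> set (map snd L) \<subseteq> R \<Longrightarrow> (\<And>x. x \<in> \<Omega> \<Longrightarrow> lsum1 L x \<le> 0) \<Longrightarrow> lsum2 L \<le> 0"
  unfolding coh_def by blast

lemma coh_mono: "coh \<Omega> R \<Longrightarrow> R' \<subseteq> R \<Longrightarrow> coh \<Omega> R'"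
  unfolding coh_def by blast

lemma coh_fun: assumes "coh \<Omega> R" "(a, v) \<in> R" "(a, w) \<in> R" shows "v = w"
proof -
  have "lsum2 [(1, (a, v)), (-1, (a, w))] \<le> 0"
    by (rule cohD[OF assms(1)]) (use assms in auto)
  moreover have "lsum2 [(1, (a, w)), (-1, (a, v))] \<le> 0"
    by (rule cohD[OF assms(1)]) (use assms in auto)
  ultimately show ?thesis by simp
qed

lemma coh_step:
  assumes coh: "coh \<Omega> R" and one: "(\<Omega>, 1) \<in> R"
  shows "\<exists>v. coh \<Omega> (insert (c, v) R)"
proof -
  define LS where "LS = {lsum2 L | L. set (map snd L) \<subseteq> R \<and> (\<forall>x\<in>\<Omega>. lsum1 L x \<le> ind c x)}"
  have ne: "0 \<in> LS" unfolding LS_def by (rule CollectI, rule exI[where x="[]"]) (simp add: ind_def)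
  have bdd: "bdd_above LS"
  proof (rule bdd_aboveI[where M=1])
    fix y assume "y \<in> LS"
    then obtain L where L: "y = lsum2 L" "set (map snd L) \<subseteq> R" "\<forall>x\<in>\<Omega>. lsum1 L x \<le> ind c x"
      unfolding LS_def by blast
    have "lsum2 (L @ [(-1, (\<Omega>, 1))]) \<le> 0"
    proof (rule cohD[OF coh])
      show "set (map snd (L @ [(-1, (\<Omega>, 1))])) \<subseteq> R" using L one by auto
      fix x assume "x \<in> \<Omega>"
      then have "lsum1 L x \<le> ind c x" using L(3) by blast
      moreover have "ind c x \<le> 1" by (simp add: ind_def)
      ultimately show "lsum1 (L @ [(- 1, \<Omega>, 1)]) x \<le> 0" using \<open>x \<in> \<Omega>\<close> by (simp add: ind_def)
    qed
    then show "y \<le> 1" using L by simp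
  qed
  define v where "v = Sup LS"
  have "coh \<Omega> (insert (c, v) R)"
    unfolding coh_def
  proof (intro allI impI)
    fix L assume Lin: "set (map snd L) \<subseteq> insert (c, v) R" and Lle: "\<forall>x\<in>\<Omega>. lsum1 L x \<le> 0"
    define P where "P = filter (\<lambda>q. snd q = (c, v)) L"
    define Q where "Q = filter (\<lambda>q. \<not> snd q = (c, v)) L"
    define t where "t = sum_list (map fst P)"
    have PP: "\<forall>q\<in>set P. snd q = (c, v)" unfolding P_def by auto
    have QR: "set (map snd Q) \<subseteq> R" using Lin unfolding Q_def by auto
    have s1: "lsum1 L x = t * ind c x + lsum1 Q x" for x
      using lsum_filter(1)[where L=L and P="\<lambda>q. snd q = (c, v)" and x=x] lsum_const[OF PP]
      unfolding P_def Q_def t_def by simp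
    have s2: "lsum2 L = t * v + lsum2 Q"
      using lsum_filter(2)[where L=L and P="\<lambda>q. snd q = (c, v)"] lsum_const[OF PP]
      unfolding P_def Q_def t_def by simp
    consider "t = 0" | "t < 0" | "t > 0" by linarith
    then show "lsum2 L \<le> 0"
    proof cases
      case 1
      have "lsum2 Q \<le> 0" by (rule cohD[OF coh QR]) (use Lle s1 1 in simp)
      then show ?thesis using s2 1 by simp
    next
      case 2
      have kt: "(-1/t) * ((-t) * z) = z" for z using 2 by simp
      have kpos: "0 \<le> -1/t" using 2 by simp
      have "lsum2 (scl (-1/t) Q) \<in> LS"
        unfolding LS_def
      proof (rule CollectI, rule exI[where x="scl (-1/t) Q"], intro conjI)
        show "\<forall>x\<in>\<Omega>. lsum1 (scl (- 1 / t) Q) x \<le> ind c x"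
        proof
          fix x assume "x \<in> \<Omega>"
          then have "t * ind c x + lsum1 Q x \<le> 0" using Lle s1 by simp
          then have "lsum1 Q x \<le> (-t) * ind c x" by simp
          then have "(-1/t) * lsum1 Q x \<le> (-1/t) * ((-t) * ind c x)" by (rule mult_left_mono[OF _ kpos])
          then have "(-1/t) * lsum1 Q x \<le> ind c x" by (simp only: kt)
          then show "lsum1 (scl (- 1 / t) Q) x \<le> ind c x" by (simp only: lsum1_simps)
        qed
      qed (use QR in auto)
      then have "lsum2 (scl (-1/t) Q) \<le> v" unfolding v_def using bdd by (rule cSup_upper)
      then have "(-1/t) * lsum2 Q \<le> v" by (simp only: lsum2_simps)
      then have "(-t) * ((-1/t) * lsum2 Q) \<le> (-t) * v" by (rule mult_left_mono) (use 2 in simp)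
      moreover have "(-t) * ((-1/t) * lsum2 Q) = lsum2 Q" using 2 by simp
      ultimately have "lsum2 Q \<le> (-t) * v" by simp
      then show ?thesis using s2 by simp
    next
      case 3
      have kt: "(1/t) * (t * z) = z" for z using 3 by simp
      have "v \<le> (1/t) * (- lsum2 Q)" unfolding v_def
      proof (rule cSup_least)
        show "LS \<noteq> {}" using ne by auto
        fix y assume "y \<in> LS"
        then obtain L' where L': "y = lsum2 L'" "set (map snd L') \<subseteq> R" "\<forall>x\<in>\<Omega>. lsum1 L' x \<le> ind c x"
          unfolding LS_def by blast
        have "\<forall>x\<in>\<Omega>. lsum1 (L' @ scl (1/t) Q) x \<le> 0"
        proof
          fix x assume x: "x \<in> \<Omega>"
          then have "t * ind c x + lsum1 Q x \<le> 0" using Lle s1 by simp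
          then have "(1/t) * (t * ind c x + lsum1 Q x) \<le> 0"
            by (rule mult_nonneg_nonpos[rotated]) (use 3 in simp)
          moreover have "(1/t) * (t * ind c x + lsum1 Q x) = ind c x + (1/t) * lsum1 Q x"
            by (simp only: distrib_left kt)
          ultimately have "ind c x + (1/t) * lsum1 Q x \<le> 0" by simp
          moreover have "lsum1 L' x \<le> ind c x" using L'(3) x by blast
          ultimately show "lsum1 (L' @ scl (1/t) Q) x \<le> 0" by (simp only: lsum1_simps)
        qed
        then have "lsum2 (L' @ scl (1/t) Q) \<le> 0" by (intro cohD[OF coh]) (use L'(2) QR in auto)
        then have "y + (1/t) * lsum2 Q \<le> 0" using L' by (simp only: lsum2_simps)
        then show "y \<le> (1/t) * (- lsum2 Q)" by simp
      qed
      then have "t * v \<le> t * ((1/t) * (- lsum2 Q))" by (rule mult_left_mono) (use 3 in simp)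
      then have "t * v \<le> - lsum2 Q" using 3 by simp
      then show ?thesis using s2 by simp
    qed
  qed
  then show ?thesis by blast
qed

lemma chain_list:
  assumes "C \<in> chains A" "C \<noteq> {}" "set xs \<subseteq> \<Union>C"
  shows "\<exists>R\<in>C. set xs \<subseteq> R"
  using assms(3)
proof (induction xs)
  case Nil then show ?case using assms(2) by auto
next
  case (Cons a xs)
  then obtain R where R: "R \<in> C" "set xs \<subseteq> R" by auto
  obtain R' where R': "R' \<in> C" "a \<in> R'" using Cons.prems by auto
  have "R \<subseteq> R' \<or> R' \<subseteq> R" using assms(1) R R' unfolding chains_def chain_subset_def by blast
  then show ?case
  proof
    assume "R \<subseteq> R'" then show ?thesis using R R' by auto
  next
    assume "R' \<subseteq> R" then show ?thesis using R R' by auto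
  qed
qed

lemma coh_ext:
  assumes coh: "coh \<Omega> R0" and one: "(\<Omega>, 1) \<in> R0"
  shows "\<exists>m. coh \<Omega> (range (\<lambda>a. (a, m a))) \<and> (\<forall>p\<in>R0. m (fst p) = snd p)"
proof -
  define A where "A = {R. R0 \<subseteq> R \<and> coh \<Omega> R}"
  have "\<forall>C\<in>chains A. \<exists>U\<in>A. \<forall>X\<in>C. X \<subseteq> U"
  proof
    fix C assume C: "C \<in> chains A"
    show "\<exists>U\<in>A. \<forall>X\<in>C. X \<subseteq> U"
    proof (cases "C = {}")
      case True then show ?thesis using coh unfolding A_def by auto
    next
      case False
      have "\<Union>C \<in> A" unfolding A_def
      proof (intro CollectI conjI)
        show "R0 \<subseteq> \<Union>C" using False C unfolding chains_def A_def by auto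
        show "coh \<Omega> (\<Union>C)" unfolding coh_def
        proof (intro allI impI)
          fix L assume "set (map snd L) \<subseteq> \<Union>C" "\<forall>x\<in>\<Omega>. lsum1 L x \<le> 0"
          moreover from chain_list[OF C False this(1)] obtain R where "R \<in> C" "set (map snd L) \<subseteq> R" by blast
          moreover have "coh \<Omega> R" using \<open>R \<in> C\<close> C unfolding chains_def A_def by auto
          ultimately show "lsum2 L \<le> 0" unfolding coh_def by blast
        qed
      qed
      then show ?thesis by blast
    qed
  qed
  from Zorn_Lemma2[OF this] obtain M where M: "M \<in> A" "\<forall>X\<in>A. M \<subseteq> X \<longrightarrow> X = M" by blast
  have cohM: "coh \<Omega> M" and R0M: "R0 \<subseteq> M" using M unfolding A_def by auto
  have tot: "\<exists>v. (c, v) \<in> M" for c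
  proof -
    obtain v where "coh \<Omega> (insert (c, v) M)" using coh_step[OF cohM] one R0M by blast
    then have "insert (c, v) M \<in> A" using R0M unfolding A_def by auto
    then have "insert (c, v) M = M" using M by blast
    then show ?thesis by blast
  qed
  define m where "m c = (SOME v. (c, v) \<in> M)" for c
  have mM: "(c, m c) \<in> M" for c unfolding m_def using tot by (rule someI_ex)
  have "range (\<lambda>a. (a, m a)) \<subseteq> M" using mM by auto
  then have "coh \<Omega> (range (\<lambda>a. (a, m a)))" using cohM coh_mono by blast
  moreover have "\<forall>p\<in>R0. m (fst p) = snd p"
  proof
    fix p assume "p \<in> R0"
    then have "(fst p, snd p) \<in> M" using R0M by auto
    then show "m (fst p) = snd p" using coh_fun[OF cohM mM[of "fst p"]] by simp
  qed
  ultimately show ?thesis by blast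
qed

lemma cg_nonneg: assumes "coh \<Omega> (range (\<lambda>a. (a, m a)))" shows "0 \<le> m a"
proof -
  have "lsum2 [(-1, (a, m a))] \<le> 0"
    by (rule cohD[OF assms]) (auto simp: ind_def)
  then show ?thesis by simp
qed

lemma cg_add: assumes "coh \<Omega> (range (\<lambda>a. (a, m a)))" "a \<inter> b = {}"
  shows "m (a \<union> b) = m a + m b"
proof -
  have i: "ind (a \<union> b) x = ind a x + ind b x" for x using assms(2) by (auto simp: ind_def)
  have "lsum2 [(1, (a \<union> b, m (a \<union> b))), (-1, (a, m a)), (-1, (b, m b))] \<le> 0"
    by (rule cohD[OF assms(1)]) (auto simp: i)
  moreover have "lsum2 [(-1, (a \<union> b, m (a \<union> b))), (1, (a, m a)), (1, (b, m b))] \<le> 0"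
    by (rule cohD[OF assms(1)]) (auto simp: i)
  ultimately show ?thesis by simp
qed


definition Sx :: "('a, 'f, 'r) str \<Rightarrow> ('f, 'r, 'a) fm \<Rightarrow> (nat \<Rightarrow> 'a) set" where
  "Sx U \<phi> = {s. assignment U s \<and> sat U s \<phi>}"

lemma equiv_in_iff: "equiv_in U \<phi> \<psi> \<longleftrightarrow> Sx U \<phi> = Sx U \<psi>"
  unfolding equiv_in_def Sx_def by auto

lemma sat_Disj[simp]: "sat M s (Disj \<phi> \<psi>) = (sat M s \<phi> \<or> sat M s \<psi>)" by (simp add: Disj_def)
lemma sat_Fls[simp]: "sat M s Fls = False" by (simp add: Fls_def)
lemma fv_Disj[simp]: "fv (Disj \<phi> \<psi>) = fv \<phi> \<union> fv \<psi>" by (simp add: Disj_def)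
lemma pars_Disj[simp]: "pars (Disj \<phi> \<psi>) = pars \<phi> \<union> pars \<psi>" by (simp add: Disj_def)
lemma wf_Disj[simp]: "wf_fm L (Disj \<phi> \<psi>) = (wf_fm L \<phi> \<and> wf_fm L \<psi>)" by (simp add: Disj_def)
lemma fv_Fls[simp]: "fv Fls = {}" and pars_Fls[simp]: "pars Fls = {}" and wf_Fls[simp]: "wf_fm L Fls"
  by (simp_all add: Fls_def)

lemma Sx_simps[simp]:
  "Sx U Tru = {s. assignment U s}"
  "Sx U (Conj \<phi> \<psi>) = Sx U \<phi> \<inter> Sx U \<psi>"
  "Sx U (Disj \<phi> \<psi>) = Sx U \<phi> \<union> Sx U \<psi>"
  "Sx U (Neg \<phi>) = {s. assignment U s} - Sx U \<phi>"
  "Sx U Fls = {}"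
  by (auto simp: Sx_def)

lemma Lx_simps[simp]:
  "Tru \<in> Lx L Z C" "Fls \<in> Lx L Z C"
  "Conj \<phi> \<psi> \<in> Lx L Z C \<longleftrightarrow> \<phi> \<in> Lx L Z C \<and> \<psi> \<in> Lx L Z C"
  "Disj \<phi> \<psi> \<in> Lx L Z C \<longleftrightarrow> \<phi> \<in> Lx L Z C \<and> \<psi> \<in> Lx L Z C"
  "Neg \<phi> \<in> Lx L Z C \<longleftrightarrow> \<phi> \<in> Lx L Z C"
  by (auto simp: Lx_def)

lemma Lx_mono: "\<phi> \<in> Lx L Z C \<Longrightarrow> Z \<subseteq> Z' \<Longrightarrow> C \<subseteq> C' \<Longrightarrow> \<phi> \<in> Lx L Z' C'"
  by (auto simp: Lx_def)

lemma k_parts: assumes "keisler L U Z C m"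
  shows "\<forall>\<phi>\<in>Lx L Z C. \<forall>\<psi>\<in>Lx L Z C. equiv_in U \<phi> \<psi> \<longrightarrow> m \<phi> = m \<psi>"
    "\<forall>\<phi>\<in>Lx L Z C. 0 \<le> m \<phi>" "m Tru = 1"
    "\<forall>\<phi>\<in>Lx L Z C. \<forall>\<psi>\<in>Lx L Z C. equiv_in U (Conj \<phi> \<psi>) Fls \<longrightarrow> m (Disj \<phi> \<psi>) = m \<phi> + m \<psi>"
  using assms unfolding keisler_def by simp_all

lemma k_inv: assumes K: "keisler L U Z C m" and "\<phi> \<in> Lx L Z C" "\<psi> \<in> Lx L Z C" "Sx U \<phi> = Sx U \<psi>"
  shows "m \<phi> = m \<psi>"
proof -
  have "equiv_in U \<phi> \<psi>" using assms(4) by (simp only: equiv_in_iff)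
  then show ?thesis using k_parts(1)[OF K] assms(2,3) by blast
qed

lemma k_nonneg: "keisler L U Z C m \<Longrightarrow> \<phi> \<in> Lx L Z C \<Longrightarrow> 0 \<le> m \<phi>"
  using k_parts(2) by blast

lemma k_add: assumes K: "keisler L U Z C m" and "\<phi> \<in> Lx L Z C" "\<psi> \<in> Lx L Z C" "Sx U \<phi> \<inter> Sx U \<psi> = {}"
  shows "m (Disj \<phi> \<psi>) = m \<phi> + m \<psi>"
proof -
  have "equiv_in U (Conj \<phi> \<psi>) Fls" using assms(4) by (simp add: equiv_in_iff)
  then show ?thesis using k_parts(4)[OF K] assms(2,3) by blast
qed

lemma k_empty: assumes K: "keisler L U Z C m" and p: "\<phi> \<in> Lx L Z C" and e: "Sx U \<phi> = {}"
  shows "m \<phi> = 0"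
proof -
  have "m (Disj \<phi> \<phi>) = m \<phi> + m \<phi>" by (rule k_add[OF K p p]) (simp add: e)
  moreover have "m (Disj \<phi> \<phi>) = m \<phi>" by (rule k_inv[OF K _ p]) (use p in simp_all)
  ultimately show ?thesis by simp
qed

lemma k_split: assumes K: "keisler L U Z C m" and p: "\<psi> \<in> Lx L Z C" "\<phi> \<in> Lx L Z C"
  shows "m \<psi> = m (Conj \<psi> \<phi>) + m (Conj \<psi> (Neg \<phi>))"
proof -
  have "m (Disj (Conj \<psi> \<phi>) (Conj \<psi> (Neg \<phi>))) = m (Conj \<psi> \<phi>) + m (Conj \<psi> (Neg \<phi>))"
    by (rule k_add[OF K]) (use p in auto)
  moreover have "m (Disj (Conj \<psi> \<phi>) (Conj \<psi> (Neg \<phi>))) = m \<psi>"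
    by (rule k_inv[OF K]) (use p in \<open>auto simp: Sx_def\<close>)
  ultimately show ?thesis by simp
qed

lemma k_mono: assumes K: "keisler L U Z C m" and p: "\<phi> \<in> Lx L Z C" "\<psi> \<in> Lx L Z C"
  and sub: "Sx U \<phi> \<subseteq> Sx U \<psi>"
  shows "m \<phi> \<le> m \<psi>"
proof -
  have "m \<psi> = m (Conj \<psi> \<phi>) + m (Conj \<psi> (Neg \<phi>))" by (rule k_split[OF K p(2) p(1)])
  moreover have "m (Conj \<psi> \<phi>) = m \<phi>" by (rule k_inv[OF K]) (use p sub in auto)
  moreover have "0 \<le> m (Conj \<psi> (Neg \<phi>))" by (rule k_nonneg[OF K]) (use p in auto)
  ultimately show ?thesis by simp
qed

lemma k_neg: assumes K: "keisler L U Z C m" and p: "\<phi> \<in> Lx L Z C"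
  shows "m (Neg \<phi>) = 1 - m \<phi>"
proof -
  have "m Tru = m (Conj Tru \<phi>) + m (Conj Tru (Neg \<phi>))" by (rule k_split[OF K]) (use p in auto)
  moreover have "m (Conj Tru \<phi>) = m \<phi>" by (rule k_inv[OF K]) (use p in \<open>auto simp: Sx_def\<close>)
  moreover have "m (Conj Tru (Neg \<phi>)) = m (Neg \<phi>)" by (rule k_inv[OF K]) (use p in \<open>auto simp: Sx_def\<close>)
  moreover have "m Tru = 1" using K unfolding keisler_def by blast
  ultimately show ?thesis by simp
qed

definition fsum1 :: "('a, 'f, 'r) str \<Rightarrow> (nat \<Rightarrow> 'a) \<Rightarrow> (real \<times> ('f, 'r, 'a) fm) list \<Rightarrow> real" where
  "fsum1 U s F = sum_list (map (\<lambda>q. fst q * (if sat U s (snd q) then 1 else 0)) F)"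

definition fsum2 :: "(('f, 'r, 'a) fm \<Rightarrow> real) \<Rightarrow> (real \<times> ('f, 'r, 'a) fm) list \<Rightarrow> real" where
  "fsum2 m F = sum_list (map (\<lambda>q. fst q * m (snd q)) F)"

lemma fsum_simps[simp]:
  "fsum1 U s [] = 0" "fsum1 U s (q # F) = fst q * (if sat U s (snd q) then 1 else 0) + fsum1 U s F"
  "fsum1 U s (scl k F) = k * fsum1 U s F"
  "fsum2 m [] = 0" "fsum2 m (q # F) = fst q * m (snd q) + fsum2 m F"
  "fsum2 m (scl k F) = k * fsum2 m F"
  "fsum1 U s (F @ G) = fsum1 U s F + fsum1 U s G"
  "fsum2 m (F @ G) = fsum2 m F + fsum2 m G"
  by (simp_all add: fsum1_def fsum2_def scl_def o_def sum_list_const_mult mult.assoc)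

lemma k_coh_gen:
  assumes K: "keisler L U Z C m"
  shows "set (map snd F) \<subseteq> Lx L Z C \<Longrightarrow> \<theta> \<in> Lx L Z C \<Longrightarrow> (\<forall>s\<in>Sx U \<theta>. fsum1 U s F \<le> d)
    \<Longrightarrow> fsum2 (\<lambda>\<phi>. m (Conj \<phi> \<theta>)) F \<le> d * m \<theta>"
proof (induction F arbitrary: \<theta> d)
  case Nil
  show ?case
  proof (cases "Sx U \<theta> = {}")
    case True then show ?thesis using k_empty[OF K Nil(2)] by simp
  next
    case False
    then have "0 \<le> d" using Nil by auto
    then show ?thesis using k_nonneg[OF K Nil(2)] by simp
  qed
next
  case (Cons q F)
  obtain c \<phi> where q: "q = (c, \<phi>)" by force
  have \<phi>: "\<phi> \<in> Lx L Z C" and F: "set (map snd F) \<subseteq> Lx L Z C" using Cons.prems q by auto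
  have \<theta>: "\<theta> \<in> Lx L Z C" by fact
  have IH1: "fsum2 (\<lambda>\<alpha>. m (Conj \<alpha> (Conj \<theta> \<phi>))) F \<le> (d - c) * m (Conj \<theta> \<phi>)"
    by (rule Cons.IH[OF F]) (use \<theta> \<phi> Cons.prems(3) q in \<open>auto simp: Sx_def\<close>)
  have IH2: "fsum2 (\<lambda>\<alpha>. m (Conj \<alpha> (Conj \<theta> (Neg \<phi>)))) F \<le> d * m (Conj \<theta> (Neg \<phi>))"
    by (rule Cons.IH[OF F]) (use \<theta> \<phi> Cons.prems(3) q in \<open>auto simp: Sx_def\<close>)
  have split: "m (Conj \<alpha> \<theta>) = m (Conj \<alpha> (Conj \<theta> \<phi>)) + m (Conj \<alpha> (Conj \<theta> (Neg \<phi>)))"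
    if "\<alpha> \<in> Lx L Z C" for \<alpha>
  proof -
    have "m (Conj \<alpha> \<theta>) = m (Conj (Conj \<alpha> \<theta>) \<phi>) + m (Conj (Conj \<alpha> \<theta>) (Neg \<phi>))"
      by (rule k_split[OF K]) (use that \<theta> \<phi> in auto)
    moreover have "m (Conj (Conj \<alpha> \<theta>) \<phi>) = m (Conj \<alpha> (Conj \<theta> \<phi>))"
      by (rule k_inv[OF K]) (use that \<theta> \<phi> in auto)
    moreover have "m (Conj (Conj \<alpha> \<theta>) (Neg \<phi>)) = m (Conj \<alpha> (Conj \<theta> (Neg \<phi>)))"
      by (rule k_inv[OF K]) (use that \<theta> \<phi> in auto)
    ultimately show ?thesis by simp
  qed
  have sumsplit: "fsum2 (\<lambda>\<alpha>. m (Conj \<alpha> \<theta>)) G = fsum2 (\<lambda>\<alpha>. m (Conj \<alpha> (Conj \<theta> \<phi>))) G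
      + fsum2 (\<lambda>\<alpha>. m (Conj \<alpha> (Conj \<theta> (Neg \<phi>)))) G" if "set (map snd G) \<subseteq> Lx L Z C" for G
    using that by (induction G) (auto simp: split algebra_simps)
  have t1: "m (Conj \<phi> \<theta>) = m (Conj \<theta> \<phi>)" by (rule k_inv[OF K]) (use \<theta> \<phi> in auto)
  have t2: "m \<theta> = m (Conj \<theta> \<phi>) + m (Conj \<theta> (Neg \<phi>))" by (rule k_split[OF K \<theta> \<phi>])
  show ?case using IH1 IH2 sumsplit[OF F] t1 t2 q by (simp add: algebra_simps)
qed

lemma k_coh0:
  assumes K: "keisler L U Z C m" and F: "set (map snd F) \<subseteq> Lx L Z C"
    and le: "\<And>s. assignment U s \<Longrightarrow> fsum1 U s F \<le> 0"
  shows "fsum2 m F \<le> 0"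
proof -
  have "fsum2 (\<lambda>\<phi>. m (Conj \<phi> Tru)) F \<le> 0 * m Tru"
    by (rule k_coh_gen[OF K F]) (use le in \<open>auto simp: Sx_def\<close>)
  moreover have "fsum2 (\<lambda>\<phi>. m (Conj \<phi> Tru)) G = fsum2 m G" if "set (map snd G) \<subseteq> Lx L Z C" for G
    using that
  proof (induction G)
    case (Cons q G)
    have "m (Conj (snd q) Tru) = m (snd q)" by (rule k_inv[OF K]) (use Cons.prems in \<open>auto simp: Sx_def\<close>)
    then show ?case using Cons by simp
  qed simp
  ultimately show ?thesis using F by simp
qed

lemma coh_R:
  assumes K: "keisler L U Z C m"
  shows "coh {s. assignment U s} {(Sx U \<phi>, m \<phi>) | \<phi>. \<phi> \<in> Lx L Z C}"
  unfolding coh_def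
proof (intro allI impI)
  fix Q assume QR: "set (map snd Q) \<subseteq> {(Sx U \<phi>, m \<phi>) | \<phi>. \<phi> \<in> Lx L Z C}"
    and le: "\<forall>x\<in>{s. assignment U s}. lsum1 Q x \<le> 0"
  have "\<forall>q\<in>set Q. \<exists>\<phi>. \<phi> \<in> Lx L Z C \<and> snd q = (Sx U \<phi>, m \<phi>)" using QR by auto
  then obtain g where g: "\<forall>q\<in>set Q. g q \<in> Lx L Z C \<and> snd q = (Sx U (g q), m (g q))" by metis
  define F where "F = map (\<lambda>q. (fst q, g q)) Q"
  have e1: "lsum1 Q x = fsum1 U x F" if "assignment U x" for x
    using g that unfolding F_def by (induction Q) (auto simp: ind_def Sx_def)
  have e2: "lsum2 Q = fsum2 m F"
    using g unfolding F_def by (induction Q) auto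
  have "fsum2 m F \<le> 0"
    by (rule k_coh0[OF K]) (use g le e1 in \<open>auto simp: F_def\<close>)
  then show "lsum2 Q \<le> 0" using e2 by simp
qed

lemma keisler_from_m:
  assumes c: "coh {s. assignment U s} (range (\<lambda>a. (a, m a)))" and one: "m {s. assignment U s} = 1"
  shows "keisler L U Z C (\<lambda>\<phi>. m (Sx U \<phi>))"
  unfolding keisler_def equiv_in_iff
proof (intro conjI ballI impI)
  show "m (Sx U Tru) = 1" using one by simp
  fix \<phi> show "0 \<le> m (Sx U \<phi>)" by (rule cg_nonneg[OF c])
next
  fix \<phi> \<psi> assume "Sx U (Conj \<phi> \<psi>) = Sx U Fls"
  then show "m (Sx U (Disj \<phi> \<psi>)) = m (Sx U \<phi>) + m (Sx U \<psi>)" using cg_add[OF c] by simp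
qed simp


lemma eval_coinc: "(\<forall>n\<in>vars_trm t. s n = s' n) \<Longrightarrow> eval M s t = eval M s' t"
proof (induction t)
  case (Fn f ts)
  then have "\<forall>x\<in>set ts. eval M s x = eval M s' x" by auto
  then have "map (eval M s) ts = map (eval M s') ts" using map_cong[OF refl, of ts "eval M s" "eval M s'"] by blast
  then show ?case by (simp only: eval.simps sat.simps)
qed auto

lemma sat_coinc: "(\<forall>n\<in>fv \<phi>. s n = s' n) \<Longrightarrow> sat M s \<phi> = sat M s' \<phi>"
proof (induction \<phi> arbitrary: s s')
  case (Eq t u) then show ?case using eval_coinc[of t s s' M] eval_coinc[of u s s' M] by auto
next
  case (Rel r ts)
  then have "\<forall>x\<in>set ts. eval M s x = eval M s' x" by (auto intro: eval_coinc)
  then have "map (eval M s) ts = map (eval M s') ts" using map_cong[OF refl, of ts "eval M s" "eval M s'"] by blast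
  then show ?case by (simp only: eval.simps sat.simps)
next
  case (Conj \<phi>1 \<phi>2)
  have "sat M s \<phi>1 = sat M s' \<phi>1" by (rule Conj.IH(1)) (use Conj.prems in auto)
  moreover have "sat M s \<phi>2 = sat M s' \<phi>2" by (rule Conj.IH(2)) (use Conj.prems in auto)
  ultimately show ?case by simp
next
  case (Ex v \<phi>)
  have "sat M (s(v := a)) \<phi> = sat M (s'(v := a)) \<phi>" for a by (rule Ex.IH) (use Ex.prems in auto)
  then show ?case by simp
qed auto

fun exs :: "nat list \<Rightarrow> ('f, 'r, 'a) fm \<Rightarrow> ('f, 'r, 'a) fm" where
  "exs [] \<phi> = \<phi>"
| "exs (v # vs) \<phi> = Ex v (exs vs \<phi>)"

lemma exs_props[simp]: "fv (exs vs \<phi>) = fv \<phi> - set vs" "pars (exs vs \<phi>) = pars \<phi>"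
  "wf_fm L (exs vs \<phi>) = wf_fm L \<phi>"
  by (induction vs) auto

lemma exs_sat_D: "assignment U s \<Longrightarrow> sat U s (exs vs \<phi>) \<Longrightarrow>
   \<exists>s'. assignment U s' \<and> (\<forall>n. n \<notin> set vs \<longrightarrow> s' n = s n) \<and> sat U s' \<phi>"
proof (induction vs arbitrary: s)
  case (Cons v vs)
  then obtain a where a: "a \<in> dom U" "sat U (s(v := a)) (exs vs \<phi>)" by auto
  have "assignment U (s(v := a))" using Cons.prems a unfolding assignment_def by auto
  from Cons.IH[OF this a(2)] show ?case by auto
qed auto

lemma exs_sat_I: "assignment U s \<Longrightarrow> sat U s \<phi> \<Longrightarrow> sat U s (exs vs \<phi>)"
proof (induction vs)
  case (Cons v vs)
  then have "s v \<in> dom U" unfolding assignment_def by auto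
  then show ?case using Cons by (auto intro!: bexI[where x="s v"])
qed auto

fun pos_fm :: "(real \<times> ('f, 'r, 'a) fm) list \<Rightarrow> real \<Rightarrow> ('f, 'r, 'a) fm" where
  "pos_fm [] d = (if 0 > d then Tru else Fls)"
| "pos_fm (q # F) d = Disj (Conj (snd q) (pos_fm F (d - fst q))) (Conj (Neg (snd q)) (pos_fm F d))"

lemma pos_fm_sat: "sat U s (pos_fm F d) \<longleftrightarrow> fsum1 U s F > d"
proof (induction F arbitrary: d)
  case Nil then show ?case by simp
next
  case (Cons q F)
  show ?case
  proof (cases "sat U s (snd q)")
    case True
    then show ?thesis using Cons.IH[of "d - fst q"] by (simp only: pos_fm.simps sat_Disj sat.simps fsum_simps if_True simp_thms mult_1_right) arith
  next
    case False
    then show ?thesis using Cons.IH[of d] by (simp only: pos_fm.simps sat_Disj sat.simps fsum_simps if_False simp_thms mult_zero_right add_0)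
  qed
qed

lemma pos_fm_Lx: "set (map snd F) \<subseteq> Lx L Z C \<Longrightarrow> pos_fm F d \<in> Lx L Z C"
  by (induction F arbitrary: d) auto

lemma triv_eq_aux:
  "sat M s (foldr (\<lambda>v \<phi>. Conj (Eq (Var v) (Var v)) \<phi>) vs Tru)"
  "fv (foldr (\<lambda>v \<phi>. Conj (Eq (Var v) (Var v)) \<phi>) vs (Tru :: ('f, 'r, 'a) fm)) = set vs"
  "pars (foldr (\<lambda>v \<phi>. Conj (Eq (Var v) (Var v)) \<phi>) vs (Tru :: ('f, 'r, 'a) fm)) = {}"
  "wf_fm L (foldr (\<lambda>v \<phi>. Conj (Eq (Var v) (Var v)) \<phi>) vs (Tru :: ('f, 'r, 'a) fm))"
  by (induction vs) auto

lemma triv_eq_props: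
  assumes "finite Y"
  shows "Sx U (triv_eq Y) = {s. assignment U s}" "triv_eq Y \<in> Lx L Y C"
  using triv_eq_aux[where vs="sorted_list_of_set Y"] assms
  by (auto simp: Sx_def triv_eq_def Lx_def)


lemma Sx_sub: "Sx U \<phi> \<subseteq> {s. assignment U s}" by (auto simp: Sx_def)

theorem proposition4p7:
  fixes L :: "('f, 'r) sig"
    and T :: "('f, 'r, 'a) fm set"
    and \<kappa> :: "'k rel"
    and U :: "('a, 'f, 'r) str"
    and A :: "'a set"
    and X Y :: "nat set"
    and \<mu> \<nu> :: "('f, 'r, 'a) fm \<Rightarrow> real"
  assumes "complete_theory L T"
    and "monster L T \<kappa> U"
    and "A \<subseteq> dom U" and "small \<kappa> A"
    and "finite X" and "finite Y" and "X \<inter> Y = {}"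
    and "keisler L U X (dom U) \<mu>"
    and "keisler L U Y (dom U) \<nu>"
    and "smooth L U X A \<mu>"
    and "E_geq L U X Y A \<mu> \<nu>"
  shows "smooth L U Y A \<nu>"
proof -
  let ?\<Omega> = "{s. assignment U s}"
  from assms(11) obtain lam where Klam: "keisler L U (X \<union> Y) A lam"
    and agr: "agree_on L X A (marg Y lam) \<mu>"
    and H: "\<And>\<omega>. keisler L U (X \<union> Y) (dom U) \<omega> \<Longrightarrow> agree_on L (X \<union> Y) A \<omega> lam \<Longrightarrow>
       agree_on L X (dom U) (marg Y \<omega>) \<mu> \<Longrightarrow> agree_on L Y (dom U) (marg X \<omega>) \<nu>"
    unfolding E_geq_def by blast
  define Rl where "Rl = {(Sx U \<phi>, lam \<phi>) | \<phi>. \<phi> \<in> Lx L (X \<union> Y) A}"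
  have cohRl: "coh ?\<Omega> Rl" unfolding Rl_def by (rule coh_R[OF Klam])
  have lamTru: "lam Tru = 1" using Klam by (simp add: keisler_def)
  have oneRl: "(?\<Omega>, 1) \<in> Rl" unfolding Rl_def
    by (rule CollectI, rule exI[where x=Tru]) (simp add: lamTru)
  have G: "m (Sx U \<psi>) = \<nu> \<psi>"
    if c: "coh ?\<Omega> (range (\<lambda>a. (a, m a)))" and ex: "\<forall>p\<in>Rl. m (fst p) = snd p"
      and \<psi>: "\<psi> \<in> Lx L Y (dom U)" for m \<psi>
  proof -
    have m\<phi>: "m (Sx U \<phi>) = lam \<phi>" if "\<phi> \<in> Lx L (X \<union> Y) A" for \<phi>
      using ex that unfolding Rl_def by auto
    have one: "m ?\<Omega> = 1" using m\<phi>[of Tru] lamTru by simp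
    define \<omega> where "\<omega> = (\<lambda>\<phi>. m (Sx U \<phi>))"
    have mY: "marg Y \<omega> = \<omega>" unfolding marg_def \<omega>_def
      by (rule ext) (simp add: triv_eq_props(1)[OF assms(6)] Int_absorb2 Sx_sub)
    have mX: "marg X \<omega> = \<omega>" unfolding marg_def \<omega>_def
      by (rule ext) (simp add: triv_eq_props(1)[OF assms(5)] Int_absorb2 Sx_sub)
    have K1: "keisler L U (X \<union> Y) (dom U) \<omega>" unfolding \<omega>_def by (rule keisler_from_m[OF c one])
    have a1: "agree_on L (X \<union> Y) A \<omega> lam" unfolding agree_on_def \<omega>_def using m\<phi> by simp
    have K2': "keisler L U X (dom U) \<omega>" unfolding \<omega>_def by (rule keisler_from_m[OF c one])
    have K2: "keisler L U X (dom U) (marg Y \<omega>)" using K2' by (simp only: mY)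
    have a2: "agree_on L X A (marg Y \<omega>) \<mu>" unfolding agree_on_def
    proof
      fix \<phi> assume \<phi>: "\<phi> \<in> Lx L X A"
      have cL: "Conj \<phi> (triv_eq Y) \<in> Lx L (X \<union> Y) A"
        using Lx_mono[OF \<phi>, of "X \<union> Y" A] Lx_mono[OF triv_eq_props(2)[OF assms(6)], of "X \<union> Y" A] by auto
      have "marg Y \<omega> \<phi> = m (Sx U (Conj \<phi> (triv_eq Y)))" unfolding marg_def \<omega>_def ..
      also have "\<dots> = lam (Conj \<phi> (triv_eq Y))" using m\<phi>[OF cL] .
      also have "\<dots> = \<mu> \<phi>" using agr \<phi> unfolding agree_on_def marg_def by simp
      finally show "marg Y \<omega> \<phi> = \<mu> \<phi>" .
    qed
    have "agree_on L X (dom U) (marg Y \<omega>) \<mu>" using assms(10) K2 a2 unfolding smooth_def by blast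
    then have "agree_on L Y (dom U) (marg X \<omega>) \<nu>" by (rule H[OF K1 a1])
    then have "\<forall>\<phi>\<in>Lx L Y (dom U). \<omega> \<phi> = \<nu> \<phi>" unfolding agree_on_def by (simp only: mX)
    then show ?thesis using \<psi> unfolding \<omega>_def by blast
  qed
  obtain m0 where m0: "coh ?\<Omega> (range (\<lambda>a. (a, m0 a)))" "\<forall>p\<in>Rl. m0 (fst p) = snd p"
    using coh_ext[OF cohRl oneRl] by blast
  have lam\<nu>: "lam \<chi> = \<nu> \<chi>" if \<chi>: "\<chi> \<in> Lx L Y A" for \<chi>
  proof -
    have "\<chi> \<in> Lx L Y (dom U)" using Lx_mono[OF \<chi>, of Y "dom U"] assms(3) by simp
    then have "m0 (Sx U \<chi>) = \<nu> \<chi>" by (rule G[OF m0])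
    moreover have "\<chi> \<in> Lx L (X \<union> Y) A" using Lx_mono[OF \<chi>, of "X \<union> Y" A] by simp
    then have "m0 (Sx U \<chi>) = lam \<chi>" using m0(2) unfolding Rl_def by auto
    ultimately show ?thesis by simp
  qed
  show ?thesis unfolding smooth_def
  proof (intro allI impI)
    fix \<nu>' assume "keisler L U Y (dom U) \<nu>' \<and> agree_on L Y A \<nu>' \<nu>"
    then have K': "keisler L U Y (dom U) \<nu>'" and ag': "agree_on L Y A \<nu>' \<nu>" by auto
    have core: "fsum2 lam F \<le> \<nu>' \<psi>0"
      if F: "set (map snd F) \<subseteq> Lx L (X \<union> Y) A" and \<psi>0: "\<psi>0 \<in> Lx L Y (dom U)"
        and le: "\<forall>s. assignment U s \<longrightarrow> fsum1 U s F \<le> (if sat U s \<psi>0 then 1 else 0)" for F \<psi>0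
    proof -
      define \<theta> where "\<theta> = pos_fm F 0"
      have \<theta>L: "\<theta> \<in> Lx L (X \<union> Y) A" using pos_fm_Lx[OF F] unfolding \<theta>_def .
      define \<chi> where "\<chi> = exs (sorted_list_of_set X) \<theta>"
      have \<chi>L: "\<chi> \<in> Lx L Y A" using \<theta>L assms(5) unfolding \<chi>_def Lx_def by auto
      have \<chi>L2: "\<chi> \<in> Lx L (X \<union> Y) A" using Lx_mono[OF \<chi>L, of "X \<union> Y" A] by simp
      have \<chi>L3: "\<chi> \<in> Lx L Y (dom U)" using Lx_mono[OF \<chi>L, of Y "dom U"] assms(3) by simp
      have s1: "fsum2 lam F \<le> lam \<theta>"
      proof -
        have "fsum2 lam (F @ [(-1, \<theta>)]) \<le> 0"
        proof (rule k_coh0[OF Klam])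
          show "set (map snd (F @ [(-1, \<theta>)])) \<subseteq> Lx L (X \<union> Y) A" using F \<theta>L by auto
          fix s assume s: "assignment U s"
          have "fsum1 U s F \<le> 1" using le s by (smt (verit))
          then show "fsum1 U s (F @ [(-1, \<theta>)]) \<le> 0"
            using pos_fm_sat[of U s F 0] unfolding \<theta>_def by auto
        qed
        then show ?thesis by simp
      qed
      have s2: "lam \<theta> \<le> lam \<chi>"
        by (rule k_mono[OF Klam \<theta>L \<chi>L2]) (auto simp: Sx_def \<chi>_def intro: exs_sat_I)
      have s3: "lam \<chi> = \<nu> \<chi>" by (rule lam\<nu>[OF \<chi>L])
      have s4: "\<nu> \<chi> = \<nu>' \<chi>" using ag' \<chi>L unfolding agree_on_def by simp
      have s5: "\<nu>' \<chi> \<le> \<nu>' \<psi>0"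
      proof (rule k_mono[OF K' \<chi>L3 \<psi>0])
        show "Sx U \<chi> \<subseteq> Sx U \<psi>0"
        proof
          fix s assume "s \<in> Sx U \<chi>"
          then have s: "assignment U s" "sat U s (exs (sorted_list_of_set X) \<theta>)"
            by (auto simp: Sx_def \<chi>_def)
          from exs_sat_D[OF s] obtain s' where s': "assignment U s'"
            "\<forall>n. n \<notin> set (sorted_list_of_set X) \<longrightarrow> s' n = s n" "sat U s' \<theta>" by blast
          have "fsum1 U s' F > 0" using s'(3) pos_fm_sat unfolding \<theta>_def by blast
          then have "sat U s' \<psi>0" using le s'(1) by (smt (verit))
          moreover have "\<forall>n\<in>fv \<psi>0. s' n = s n" using s'(2) \<psi>0 assms(5,7) by (auto simp: Lx_def)
          ultimately have "sat U s \<psi>0" using sat_coinc by blast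
          then show "s \<in> Sx U \<psi>0" using s by (simp add: Sx_def)
        qed
      qed
      show ?thesis using s1 s2 s3 s4 s5 by simp
    qed
    show "agree_on L Y (dom U) \<nu>' \<nu>" unfolding agree_on_def
    proof
      fix \<psi> assume \<psi>: "\<psi> \<in> Lx L Y (dom U)"
      have cohR1: "coh ?\<Omega> (insert (Sx U \<psi>, \<nu>' \<psi>) Rl)" unfolding coh_def
      proof (intro allI impI)
        fix L0 assume Lin: "set (map snd L0) \<subseteq> insert (Sx U \<psi>, \<nu>' \<psi>) Rl"
          and Lle: "\<forall>x\<in>?\<Omega>. lsum1 L0 x \<le> 0"
        define P where "P = filter (\<lambda>q. snd q = (Sx U \<psi>, \<nu>' \<psi>)) L0"
        define Q where "Q = filter (\<lambda>q. \<not> snd q = (Sx U \<psi>, \<nu>' \<psi>)) L0"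
        define t where "t = sum_list (map fst P)"
        have PP: "\<forall>q\<in>set P. snd q = (Sx U \<psi>, \<nu>' \<psi>)" unfolding P_def by auto
        have QR: "set (map snd Q) \<subseteq> Rl" using Lin unfolding Q_def by auto
        have e1: "lsum1 L0 x = t * ind (Sx U \<psi>) x + lsum1 Q x" for x
          using lsum_filter(1)[where L=L0 and P="\<lambda>q. snd q = (Sx U \<psi>, \<nu>' \<psi>)" and x=x] lsum_const[OF PP]
          unfolding P_def Q_def t_def by simp
        have e2: "lsum2 L0 = t * \<nu>' \<psi> + lsum2 Q"
          using lsum_filter(2)[where L=L0 and P="\<lambda>q. snd q = (Sx U \<psi>, \<nu>' \<psi>)"] lsum_const[OF PP]
          unfolding P_def Q_def t_def by simp
        have "\<forall>q\<in>set Q. \<exists>\<phi>. \<phi> \<in> Lx L (X \<union> Y) A \<and> snd q = (Sx U \<phi>, lam \<phi>)" using QR unfolding Rl_def by auto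
        then obtain g where g: "\<forall>q\<in>set Q. g q \<in> Lx L (X \<union> Y) A \<and> snd q = (Sx U (g q), lam (g q))" by metis
        define F where "F = map (\<lambda>q. (fst q, g q)) Q"
        have FL: "set (map snd F) \<subseteq> Lx L (X \<union> Y) A" using g unfolding F_def by auto
        have f1: "lsum1 Q x = fsum1 U x F" if "assignment U x" for x
          using g that unfolding F_def by (induction Q) (auto simp: ind_def Sx_def)
        have f2: "lsum2 Q = fsum2 lam F"
          using g unfolding F_def by (induction Q) auto
        define I where "I x = (if sat U x \<psi> then 1 else (0::real))" for x
        have key: "t * I x + fsum1 U x F \<le> 0" if "assignment U x" for x
        proof -
          have "lsum1 L0 x \<le> 0" using Lle that by simp
          moreover have "ind (Sx U \<psi>) x = I x" using that by (simp add: I_def ind_def Sx_def)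
          ultimately show ?thesis using e1[of x] f1[OF that] by simp
        qed
        consider "t = 0" | "t < 0" | "t > 0" by linarith
        then show "lsum2 L0 \<le> 0"
        proof cases
          case 1
          have "fsum2 lam F \<le> 0" by (rule k_coh0[OF Klam FL]) (use key 1 in auto)
          then show ?thesis using e2 f2 1 by simp
        next
          case 2
          have "fsum2 lam (scl (-1/t) F) \<le> \<nu>' \<psi>"
          proof (rule core[OF _ \<psi>])
            show "set (map snd (scl (- 1 / t) F)) \<subseteq> Lx L (X \<union> Y) A" using FL by simp
            show "\<forall>s. assignment U s \<longrightarrow> fsum1 U s (scl (- 1 / t) F) \<le> (if sat U s \<psi> then 1 else 0)"
            proof (intro allI impI)
              fix s assume s: "assignment U s"
              have "fsum1 U s F \<le> (-t) * I s" using key[OF s] by simp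
              then have "(-1/t) * fsum1 U s F \<le> (-1/t) * ((-t) * I s)"
                by (rule mult_left_mono) (use 2 in simp)
              also have "\<dots> = I s" using 2 by simp
              finally show "fsum1 U s (scl (- 1 / t) F) \<le> (if sat U s \<psi> then 1 else 0)" by (simp add: I_def)
            qed
          qed
          then have "(-1/t) * fsum2 lam F \<le> \<nu>' \<psi>" by simp
          then have "(-t) * ((-1/t) * fsum2 lam F) \<le> (-t) * \<nu>' \<psi>"
            by (rule mult_left_mono) (use 2 in simp)
          then have "fsum2 lam F \<le> (-t) * \<nu>' \<psi>" using 2 by simp
          then show ?thesis using e2 f2 by simp
        next
          case 3
          have n\<psi>: "Neg \<psi> \<in> Lx L Y (dom U)" using \<psi> by simp
          have "fsum2 lam ((1, Tru) # scl (1/t) F) \<le> \<nu>' (Neg \<psi>)"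
          proof (rule core[OF _ n\<psi>])
            show "set (map snd ((1, Tru) # scl (1/t) F)) \<subseteq> Lx L (X \<union> Y) A" using FL by simp
            show "\<forall>s. assignment U s \<longrightarrow> fsum1 U s ((1, Tru) # scl (1/t) F) \<le> (if sat U s (Neg \<psi>) then 1 else 0)"
            proof (intro allI impI)
              fix s assume s: "assignment U s"
              have "fsum1 U s F \<le> (-t) * I s" using key[OF s] by simp
              then have "(1/t) * fsum1 U s F \<le> (1/t) * ((-t) * I s)"
                by (rule mult_left_mono) (use 3 in simp)
              also have "\<dots> = - I s" using 3 by simp
              finally show "fsum1 U s ((1, Tru) # scl (1/t) F) \<le> (if sat U s (Neg \<psi>) then 1 else 0)"
                by (simp add: I_def split: if_splits)
            qed
          qed
          then have "1 + (1/t) * fsum2 lam F \<le> 1 - \<nu>' \<psi>"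
            using k_neg[OF K', of \<psi>] \<psi> lamTru by simp
          then have "(1/t) * fsum2 lam F \<le> - \<nu>' \<psi>" by simp
          then have "t * ((1/t) * fsum2 lam F) \<le> t * (- \<nu>' \<psi>)"
            by (rule mult_left_mono) (use 3 in simp)
          then have "fsum2 lam F \<le> - t * \<nu>' \<psi>" using 3 by simp
          then show ?thesis using e2 f2 by simp
        qed
      qed
      have one1: "(?\<Omega>, 1) \<in> insert (Sx U \<psi>, \<nu>' \<psi>) Rl" using oneRl by simp
      obtain m1 where m1: "coh ?\<Omega> (range (\<lambda>a. (a, m1 a)))"
        "\<forall>p\<in>insert (Sx U \<psi>, \<nu>' \<psi>) Rl. m1 (fst p) = snd p"
        using coh_ext[OF cohR1 one1] by blast
      have "m1 (Sx U \<psi>) = \<nu> \<psi>" by (rule G[OF m1(1) _ \<psi>]) (use m1(2) in simp)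
      moreover have "m1 (Sx U \<psi>) = \<nu>' \<psi>" using m1(2) by simp
      ultimately show "\<nu>' \<psi> = \<nu> \<psi>" by simp
    qed
  qed
qed

end
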